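(* Let $Z=(X,Y)\in\mathfrak X_S$ be as in the setup, and assume $A=-2C$. Let $$G(x,y)=H(x^2+y^2)-(H+1)xy+\frac{2CH\Lambda(y-x)}{C^2+1}+\frac{\Lambda^2(H-1)}{C^2+1},$$ and let $P_X=f_1f_2$ be the first integral of $X$ (under $A=-2C$ the exponent $-2C/A$ equals $1$). Then for all $(x,y)\in\mathbb R^2$, $$P_X(x,y,0)-P_X(-y,-x,0)=-(x+y)\,G(x,y).$$ Hence the closure condition for symmetric crossings off the line $\{x+y=0\}$ defines the conic $$\Gamma_1=\{(x,y,0): G(x,y)=0\}\subset\Sigma.$$ Moreover: - (a) $\Gamma_1$ is a pair of lines iff $H=1$; - (b) $\Gamma_1$ is a parabola iff $H=-\tfrac13$; - (c) $\Gamma_1$ is a hyperbola iff $-\tfrac13<H<1$; - (d) $\Gamma_1$ is an ellipse iff $H<-\tfrac13$ or $H>1$. The discriminant of the quadratic part of $G$ is $D(\Gamma_1)=(H+1)^2-4H^2=(1-H)(3H+1)$.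
   Context: Setup. Fix real parameters $A\neq 0$, $C$, $H$, $\Lambda$. Let $\Sigma=\{z=0\}$, $\Sigma^+=\{z\ge0\}$ and $\Sigma^-=\{z<0\}$. Define $$X(x,y,z)=\big(Ax-H(((A-C)^2+1)z-\Lambda),\ \Lambda-(1+C^2)z,\ y+2Cz\big),$$ $$Y(x,y,z)=\big(-\Lambda-(1+C^2)z,\ Ay-H(((A-C)^2+1)z+\Lambda),\ x+2Cz\big).$$ $Z$ equals $X$ on $\Sigma^+$ and $Y$ on $\Sigma^-$ (family $\mathfrak X_S$, equivariant under $S(x,y,z)=(-y,-x,-z)$). The functions $f_1$ and $f_2$ are $$f_1=y^2+2C\Big(z+\frac{\Lambda}{C^2+1}\Big)y+(C^2+1)z^2+\frac{2\Lambda(C^2-1)z}{C^2+1}+\frac{\Lambda^2}{C^2+1},\qquad f_2=x-H(Az+y).$$ They are Darboux polynomials of $X$, and $P_X=f_1f_2^{-2C/A}$ is a first integral of $X$. *)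

theory Defs
  imports Complex_Main
begin

definition f1 :: "real \<Rightarrow> real \<Rightarrow> real \<Rightarrow> real \<Rightarrow> real \<Rightarrow> real \<Rightarrow> real \<Rightarrow> real" where
  "f1 A C H \<Lambda> x y z = y\<^sup>2 + 2 * C * (z + \<Lambda> / (C\<^sup>2 + 1)) * y + (C\<^sup>2 + 1) * z\<^sup>2
      + 2 * \<Lambda> * (C\<^sup>2 - 1) * z / (C\<^sup>2 + 1) + \<Lambda>\<^sup>2 / (C\<^sup>2 + 1)"

definition f2 :: "real \<Rightarrow> real \<Rightarrow> real \<Rightarrow> real \<Rightarrow> real \<Rightarrow> real \<Rightarrow> real \<Rightarrow> real" where
  "f2 A C H \<Lambda> x y z = x - H * (A * z + y)"

text \<open>First integral P_X = f1 * f2^(-2C/A); under A = -2C the exponent is 1.\<close>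
definition PX1 :: "real \<Rightarrow> real \<Rightarrow> real \<Rightarrow> real \<Rightarrow> real \<Rightarrow> real \<Rightarrow> real \<Rightarrow> real" where
  "PX1 A C H \<Lambda> x y z = f1 A C H \<Lambda> x y z * f2 A C H \<Lambda> x y z"

definition G :: "real \<Rightarrow> real \<Rightarrow> real \<Rightarrow> real \<Rightarrow> real \<Rightarrow> real" where
  "G C H \<Lambda> x y = H * (x\<^sup>2 + y\<^sup>2) - (H + 1) * x * y + 2 * C * H * \<Lambda> * (y - x) / (C\<^sup>2 + 1)
      + \<Lambda>\<^sup>2 * (H - 1) / (C\<^sup>2 + 1)"

definition Gamma1 :: "real \<Rightarrow> real \<Rightarrow> real \<Rightarrow> (real \<times> real \<times> real) set" where
  "Gamma1 C H \<Lambda> = {(x, y, z). z = 0 \<and> G C H \<Lambda> x y = 0}"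

definition conic_coeffs :: "(real \<Rightarrow> real \<Rightarrow> real) \<Rightarrow> real \<Rightarrow> real \<Rightarrow> real \<Rightarrow> real \<Rightarrow> real \<Rightarrow> real \<Rightarrow> bool" where
  "conic_coeffs q a b c d e f \<longleftrightarrow> (a, b, c) \<noteq> (0, 0, 0) \<and>
     (\<forall>x y. q x y = a * x\<^sup>2 + b * x * y + c * y\<^sup>2 + d * x + e * y + f)"

definition conic_disc :: "real \<Rightarrow> real \<Rightarrow> real \<Rightarrow> real" where
  "conic_disc a b c = b\<^sup>2 - 4 * a * c"

definition conic_det :: "real \<Rightarrow> real \<Rightarrow> real \<Rightarrow> real \<Rightarrow> real \<Rightarrow> real \<Rightarrow> real" where
  "conic_det a b c d e f =
     a * (c * f - (e/2)\<^sup>2) - (b/2) * ((b/2) * f - (e/2) * (d/2)) + (d/2) * ((b/2) * (e/2) - c * (d/2))"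

definition is_ellipse :: "(real \<Rightarrow> real \<Rightarrow> real) \<Rightarrow> bool" where
  "is_ellipse q \<longleftrightarrow> (\<exists>a b c d e f. conic_coeffs q a b c d e f \<and> conic_disc a b c < 0)"

definition is_hyperbola :: "(real \<Rightarrow> real \<Rightarrow> real) \<Rightarrow> bool" where
  "is_hyperbola q \<longleftrightarrow> (\<exists>a b c d e f. conic_coeffs q a b c d e f \<and> conic_disc a b c > 0)"

definition is_parabola :: "(real \<Rightarrow> real \<Rightarrow> real) \<Rightarrow> bool" where
  "is_parabola q \<longleftrightarrow> (\<exists>a b c d e f. conic_coeffs q a b c d e f \<and> conic_disc a b c = 0
                                          \<and> conic_det a b c d e f \<noteq> 0)"

definition is_pair_of_lines :: "(real \<Rightarrow> real \<Rightarrow> real) \<Rightarrow> bool" where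
  "is_pair_of_lines q \<longleftrightarrow> (\<exists>p1 s1 r1 p2 s2 r2. (p1, s1) \<noteq> (0, 0) \<and> (p2, s2) \<noteq> (0, 0) \<and>
       (\<forall>x y. q x y = (p1 * x + s1 * y + r1) * (p2 * x + s2 * y + r2)))"

end

theory Submission
  imports Defs
begin

lemma coeff_unique:
  fixes a b c d e f a' b' c' d' e' f' :: real
  assumes h: "\<forall>x y. a*x\<^sup>2+b*x*y+c*y\<^sup>2+d*x+e*y+f = a'*x\<^sup>2+b'*x*y+c'*y\<^sup>2+d'*x+e'*y+f'"
  shows "a=a' \<and> b=b' \<and> c=c' \<and> d=d' \<and> e=e' \<and> f=f'"
proof -
  have 1: "f = f'" using h[rule_format, of 0 0] by simp
  have 2: "a+d+f = a'+d'+f'" using h[rule_format, of 1 0] by simp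
  have 3: "a-d+f = a'-d'+f'" using h[rule_format, of "-1" 0] by simp
  have 4: "c+e+f = c'+e'+f'" using h[rule_format, of 0 1] by simp
  have 5: "c-e+f = c'-e'+f'" using h[rule_format, of 0 "-1"] by simp
  have 6: "a+b+c+d+e+f = a'+b'+c'+d'+e'+f'" using h[rule_format, of 1 1] by simp
  show ?thesis using 1 2 3 4 5 6 by linarith
qed

lemma G_eq:
  "G C H \<Lambda> x y = H*x\<^sup>2 + (-(H+1))*x*y + H*y\<^sup>2 + (-(2*C*H*\<Lambda>/(C\<^sup>2+1)))*x
     + (2*C*H*\<Lambda>/(C\<^sup>2+1))*y + \<Lambda>\<^sup>2*(H-1)/(C\<^sup>2+1)"
proof -
  define D where "D = C\<^sup>2+(1::real)"
  have "D \<noteq> 0" unfolding D_def by (smt (verit) zero_le_power2)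
  then show ?thesis unfolding G_def D_def[symmetric] by (simp add: field_simps power2_eq_square)
qed

lemma G_coeffs: "conic_coeffs (G C H \<Lambda>) H (-(H+1)) H (-(2*C*H*\<Lambda>/(C\<^sup>2+1)))
     (2*C*H*\<Lambda>/(C\<^sup>2+1)) (\<Lambda>\<^sup>2*(H-1)/(C\<^sup>2+1))"
  unfolding conic_coeffs_def using G_eq[of C H \<Lambda>] by auto

lemma G_coeffs_unique:
  assumes "conic_coeffs (G C H \<Lambda>) a b c d e f"
  shows "a = H \<and> b = -(H+1) \<and> c = H \<and> d = -(2*C*H*\<Lambda>/(C\<^sup>2+1)) \<and>
     e = 2*C*H*\<Lambda>/(C\<^sup>2+1) \<and> f = \<Lambda>\<^sup>2*(H-1)/(C\<^sup>2+1)"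
  apply (rule coeff_unique)
  using assms G_eq[of C H \<Lambda>] unfolding conic_coeffs_def by auto

lemma G_det: "conic_det H (-(H+1)) H (-(2*C*H*\<Lambda>/(C\<^sup>2+1)))
     (2*C*H*\<Lambda>/(C\<^sup>2+1)) (\<Lambda>\<^sup>2*(H-1)/(C\<^sup>2+1))
   = (H-1)*\<Lambda>\<^sup>2/(4*(C\<^sup>2+1)\<^sup>2) * ((H-1)*(3*H+1)*(C\<^sup>2+1) - 4*C\<^sup>2*H\<^sup>2)"
proof -
  define D where "D = C\<^sup>2+(1::real)"
  have "D \<noteq> 0" unfolding D_def by (smt (verit) zero_le_power2)
  then show ?thesis unfolding conic_det_def D_def[symmetric] by (simp add: field_simps power2_eq_square)
qed

lemma part1:
  assumes "A = -2 * C"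
  shows "PX1 A C H \<Lambda> x y 0 - PX1 A C H \<Lambda> (-y) (-x) 0 = -(x + y) * G C H \<Lambda> x y"
proof -
  define D where "D = C\<^sup>2+(1::real)"
  have "D \<noteq> 0" unfolding D_def by (smt (verit) zero_le_power2)
  then show ?thesis unfolding PX1_def f1_def f2_def G_def D_def[symmetric]
    by (simp add: field_simps power2_eq_square)
qed


lemma bracket_nz:
  fixes C H :: real
  assumes "C \<noteq> 0" "(1-H)*(3*H+1) \<ge> 0" "H \<noteq> 1"
  shows "(H-1)*(3*H+1)*(C\<^sup>2+1) - 4*C\<^sup>2*H\<^sup>2 \<noteq> 0"
proof
  assume h: "(H-1)*(3*H+1)*(C\<^sup>2+1) - 4*C\<^sup>2*H\<^sup>2 = 0"
  have p: "C\<^sup>2+1 > 0" by (smt (verit) zero_le_power2)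
  have q: "(H-1)*(3*H+1) \<le> 0" using assms(2) by (simp add: algebra_simps)
  have "(H-1)*(3*H+1)*(C\<^sup>2+1) \<le> 0" using p q by (simp add: mult_nonpos_nonneg)
  moreover have "4*C\<^sup>2*H\<^sup>2 \<ge> 0" by simp
  ultimately have "4*C\<^sup>2*H\<^sup>2 = 0" using h by linarith
  then have "H = 0" using assms(1) by simp
  then have "C\<^sup>2 + 1 = 0" using h by simp
  then show False by (smt (verit) zero_le_power2)
qed

lemma lines_det:
  fixes p1 s1 r1 p2 s2 r2 :: real
  shows "conic_det (p1*p2) (p1*s2+p2*s1) (s1*s2) (p1*r2+p2*r1) (s1*r2+s2*r1) (r1*r2) = 0"
  unfolding conic_det_def by (simp add: algebra_simps power2_eq_square divide_simps)

lemma det_cong: "a=a' \<Longrightarrow> b=b' \<Longrightarrow> c=c' \<Longrightarrow> d=d' \<Longrightarrow> e=e' \<Longrightarrow> f=f' \<Longrightarrow>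
  conic_det a b c d e f = conic_det a' b' c' d' e' f'" by simp

theorem mainTheorem6:
  fixes A C H \<Lambda> :: real
  assumes "A \<noteq> 0" and "A = -2 * C"
  shows "(\<forall>x y. PX1 A C H \<Lambda> x y 0 - PX1 A C H \<Lambda> (-y) (-x) 0 = -(x + y) * G C H \<Lambda> x y)
    \<and> (\<forall>x y. x + y \<noteq> 0 \<longrightarrow>
          (PX1 A C H \<Lambda> x y 0 = PX1 A C H \<Lambda> (-y) (-x) 0 \<longleftrightarrow> (x, y, 0) \<in> Gamma1 C H \<Lambda>))
    \<and> (\<forall>a b c d e f. conic_coeffs (G C H \<Lambda>) a b c d e f \<longrightarrow>
          conic_disc a b c = (H + 1)\<^sup>2 - 4 * H\<^sup>2 \<and> (H + 1)\<^sup>2 - 4 * H\<^sup>2 = (1 - H) * (3 * H + 1))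
    \<and> (\<Lambda> \<noteq> 0 \<longrightarrow> (is_pair_of_lines (G C H \<Lambda>) \<longleftrightarrow> H = 1))
    \<and> (\<Lambda> \<noteq> 0 \<longrightarrow> (is_parabola (G C H \<Lambda>) \<longleftrightarrow> H = -1/3))
    \<and> (is_hyperbola (G C H \<Lambda>) \<longleftrightarrow> -1/3 < H \<and> H < 1)
    \<and> (is_ellipse (G C H \<Lambda>) \<longleftrightarrow> H < -1/3 \<or> H > 1)"
proof -
  have C0: "C \<noteq> 0" using assms by auto
  define D where "D = C\<^sup>2+(1::real)"
  have D0: "D > 0" unfolding D_def by (smt (verit) zero_le_power2)
  have discH: "(H + 1)\<^sup>2 - 4 * H\<^sup>2 = (1 - H) * (3 * H + 1)" by (simp add: algebra_simps power2_eq_square)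
  have discG: "conic_disc H (-(H+1)) H = (1 - H) * (3 * H + 1)"
    unfolding conic_disc_def by (simp add: algebra_simps power2_eq_square)
  have c1: "\<forall>x y. PX1 A C H \<Lambda> x y 0 - PX1 A C H \<Lambda> (-y) (-x) 0 = -(x + y) * G C H \<Lambda> x y"
    using part1[OF assms(2)] by blast
  have c2: "\<forall>x y. x + y \<noteq> 0 \<longrightarrow>
          (PX1 A C H \<Lambda> x y 0 = PX1 A C H \<Lambda> (-y) (-x) 0 \<longleftrightarrow> (x, y, 0) \<in> Gamma1 C H \<Lambda>)"
  proof (intro allI impI)
    fix x y :: real assume xy: "x + y \<noteq> 0"
    have "PX1 A C H \<Lambda> x y 0 = PX1 A C H \<Lambda> (-y) (-x) 0 \<longleftrightarrow> -(x + y) * G C H \<Lambda> x y = 0"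
      using c1[rule_format, of x y] by linarith
    also have "\<dots> \<longleftrightarrow> G C H \<Lambda> x y = 0" using xy by simp
    finally show "(PX1 A C H \<Lambda> x y 0 = PX1 A C H \<Lambda> (-y) (-x) 0 \<longleftrightarrow> (x, y, 0) \<in> Gamma1 C H \<Lambda>)"
      unfolding Gamma1_def by simp
  qed
  have c3: "\<forall>a b c d e f. conic_coeffs (G C H \<Lambda>) a b c d e f \<longrightarrow>
          conic_disc a b c = (H + 1)\<^sup>2 - 4 * H\<^sup>2 \<and> (H + 1)\<^sup>2 - 4 * H\<^sup>2 = (1 - H) * (3 * H + 1)"
    using G_coeffs_unique discG discH by metis
  have c4: "\<Lambda> \<noteq> 0 \<longrightarrow> (is_pair_of_lines (G C H \<Lambda>) \<longleftrightarrow> H = 1)"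
  proof (intro impI iffI)
    assume L: "\<Lambda> \<noteq> 0" and "is_pair_of_lines (G C H \<Lambda>)"
    then obtain p1 s1 r1 p2 s2 r2 where
      pq: "\<forall>x y. G C H \<Lambda> x y = (p1 * x + s1 * y + r1) * (p2 * x + s2 * y + r2)"
      unfolding is_pair_of_lines_def by blast
    have "\<forall>x y. H*x\<^sup>2 + (-(H+1))*x*y + H*y\<^sup>2 + (-(2*C*H*\<Lambda>/(C\<^sup>2+1)))*x
     + (2*C*H*\<Lambda>/(C\<^sup>2+1))*y + \<Lambda>\<^sup>2*(H-1)/(C\<^sup>2+1) =
       (p1*p2)*x\<^sup>2 + (p1*s2+p2*s1)*x*y + (s1*s2)*y\<^sup>2 + (p1*r2+p2*r1)*x + (s1*r2+s2*r1)*y + r1*r2"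
    proof (intro allI)
      fix x y
      show "H*x\<^sup>2 + (-(H+1))*x*y + H*y\<^sup>2 + (-(2*C*H*\<Lambda>/(C\<^sup>2+1)))*x
     + (2*C*H*\<Lambda>/(C\<^sup>2+1))*y + \<Lambda>\<^sup>2*(H-1)/(C\<^sup>2+1) =
       (p1*p2)*x\<^sup>2 + (p1*s2+p2*s1)*x*y + (s1*s2)*y\<^sup>2 + (p1*r2+p2*r1)*x + (s1*r2+s2*r1)*y + r1*r2"
        using pq[rule_format, of x y] G_eq[of C H \<Lambda> x y] by (simp add: algebra_simps power2_eq_square)
    qed
    note u = coeff_unique[OF this]
    have d0: "conic_det H (-(H+1)) H (-(2*C*H*\<Lambda>/(C\<^sup>2+1)))
     (2*C*H*\<Lambda>/(C\<^sup>2+1)) (\<Lambda>\<^sup>2*(H-1)/(C\<^sup>2+1)) = 0"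
    proof -
      have e2: "-(H+1) = p1*s2+p2*s1" using u by simp
      have "conic_det H (-(H+1)) H (-(2*C*H*\<Lambda>/(C\<^sup>2+1)))
     (2*C*H*\<Lambda>/(C\<^sup>2+1)) (\<Lambda>\<^sup>2*(H-1)/(C\<^sup>2+1)) =
        conic_det (p1*p2) (p1*s2+p2*s1) (s1*s2) (p1*r2+p2*r1) (s1*r2+s2*r1) (r1*r2)"
        using u e2 by (intro det_cong) blast+
      also have "\<dots> = 0" by (rule lines_det)
      finally show ?thesis .
    qed
    have "conic_disc H (-(H+1)) H = (p1*s2-p2*s1)\<^sup>2"
      using u unfolding conic_disc_def by (simp add: algebra_simps power2_eq_square)
    then have dge: "(1-H)*(3*H+1) \<ge> 0" using discG by (metis zero_le_power2)
    show "H = 1"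
    proof (rule ccontr)
      assume "H \<noteq> 1"
      have "(H-1)*\<Lambda>\<^sup>2/(4*(C\<^sup>2+1)\<^sup>2) \<noteq> 0" using \<open>H \<noteq> 1\<close> L D0 unfolding D_def by simp
      moreover have "(H-1)*(3*H+1)*(C\<^sup>2+1) - 4*C\<^sup>2*H\<^sup>2 \<noteq> 0"
        using bracket_nz[OF C0 dge \<open>H \<noteq> 1\<close>] .
      ultimately show False using d0 G_det[of H C \<Lambda>] by simp
    qed
  next
    assume "H = 1"
    show "is_pair_of_lines (G C H \<Lambda>)" unfolding is_pair_of_lines_def
    proof (intro exI conjI allI)
      fix x y
      show "G C H \<Lambda> x y = (1 * x + (-1) * y + 0) * (1 * x + (-1) * y + (-(2*C*\<Lambda>/(C\<^sup>2+1))))"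
        using G_eq[of C H \<Lambda> x y] \<open>H = 1\<close> by (simp add: algebra_simps power2_eq_square diff_divide_distrib add_divide_distrib)
    qed auto
  qed
  have c5: "\<Lambda> \<noteq> 0 \<longrightarrow> (is_parabola (G C H \<Lambda>) \<longleftrightarrow> H = -1/3)"
  proof (intro impI iffI)
    assume L: "\<Lambda> \<noteq> 0" and "is_parabola (G C H \<Lambda>)"
    then obtain a b c d e f where cf: "conic_coeffs (G C H \<Lambda>) a b c d e f"
      and "conic_disc a b c = 0" and dt: "conic_det a b c d e f \<noteq> 0"
      unfolding is_parabola_def by blast
    note u = G_coeffs_unique[OF cf]
    have "(1-H)*(3*H+1) = 0" using u discG \<open>conic_disc a b c = 0\<close> by simp
    moreover have "H \<noteq> 1" using dt u G_det[of H C \<Lambda>] by auto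
    ultimately show "H = -1/3" by simp
  next
    assume L: "\<Lambda> \<noteq> 0" and h: "H = -1/3"
    have "(H-1)*\<Lambda>\<^sup>2/(4*(C\<^sup>2+1)\<^sup>2) \<noteq> 0" using h L D0 unfolding D_def by simp
    moreover have "(H-1)*(3*H+1)*(C\<^sup>2+1) - 4*C\<^sup>2*H\<^sup>2 \<noteq> 0"
    proof -
      have "(1-H)*(3*H+1) \<ge> 0" "H \<noteq> 1" using h by simp_all
      then show ?thesis using bracket_nz[OF C0] by blast
    qed
    ultimately have "conic_det H (-(H+1)) H (-(2*C*H*\<Lambda>/(C\<^sup>2+1)))
     (2*C*H*\<Lambda>/(C\<^sup>2+1)) (\<Lambda>\<^sup>2*(H-1)/(C\<^sup>2+1)) \<noteq> 0" using G_det[of H C \<Lambda>] by simp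
    moreover have "conic_disc H (-(H+1)) H = 0" using discG h by simp
    ultimately show "is_parabola (G C H \<Lambda>)" unfolding is_parabola_def using G_coeffs by blast
  qed
  have key: "(1-H)*(3*H+1) > 0 \<longleftrightarrow> -1/3 < H \<and> H < 1"
    by (simp add: zero_less_mult_iff) linarith
  have key2: "(1-H)*(3*H+1) < 0 \<longleftrightarrow> H < -1/3 \<or> H > 1"
    by (simp add: mult_less_0_iff) linarith
  have c6: "is_hyperbola (G C H \<Lambda>) \<longleftrightarrow> -1/3 < H \<and> H < 1"
  proof
    assume "is_hyperbola (G C H \<Lambda>)"
    then obtain a b c d e f where cf: "conic_coeffs (G C H \<Lambda>) a b c d e f"
      and "conic_disc a b c > 0" unfolding is_hyperbola_def by blast
    then show "-1/3 < H \<and> H < 1" using G_coeffs_unique[OF cf] discG key by simp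
  next
    assume "-1/3 < H \<and> H < 1"
    then show "is_hyperbola (G C H \<Lambda>)" unfolding is_hyperbola_def using G_coeffs discG key by metis
  qed
  have c7: "is_ellipse (G C H \<Lambda>) \<longleftrightarrow> H < -1/3 \<or> H > 1"
  proof
    assume "is_ellipse (G C H \<Lambda>)"
    then obtain a b c d e f where cf: "conic_coeffs (G C H \<Lambda>) a b c d e f"
      and "conic_disc a b c < 0" unfolding is_ellipse_def by blast
    then show "H < -1/3 \<or> H > 1" using G_coeffs_unique[OF cf] discG key2 by simp
  next
    assume "H < -1/3 \<or> H > 1"
    then show "is_ellipse (G C H \<Lambda>)" unfolding is_ellipse_def using G_coeffs discG key2 by metis
  qed
  show ?thesis using c1 c2 c3 c4 c5 c6 c7 by blast
qed

end
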